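(* Let $(X,d)$ be a compact metric space, $\epsilon>0$, and $A$ an $\epsilon$-approximation of $X$. Then the map $p:X\to\mathcal{U}_{4\epsilon}(A)$ given by $p(x)=\{a\in A\mid d(x,a)=d(x,A)\}$ is well-defined and continuous.
   Context: A finite set $A\subset X$ is an $\epsilon$-approximation of $X$ if for every $x\in X$ there is $a\in A$ with $d(x,a)<\epsilon$. $\mathcal{U}_{4\epsilon}(A)=\{C\subseteq A\mid C\neq\emptyset,\ \mathrm{diam}(C)<4\epsilon\}$, a finite poset under inclusion regarded as a finite $T_0$ space whose open sets are the down-sets. $d(x,A)=\min_{a\in A}d(x,a)$. *)

theory Defs
  imports "HOL-Analysis.Analysis"
begin

definition eps_approx :: "'a::metric_space set \<Rightarrow> real \<Rightarrow> 'a set \<Rightarrow> bool" where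
  "eps_approx X eps A \<longleftrightarrow> finite A \<and> A \<subseteq> X \<and> (\<forall>x\<in>X. \<exists>a\<in>A. dist x a < eps)"

definition U_sets :: "real \<Rightarrow> 'a::metric_space set \<Rightarrow> 'a set set" where
  "U_sets r A = {C. C \<subseteq> A \<and> C \<noteq> {} \<and> diameter C < r}"

definition dist_set :: "'a::metric_space \<Rightarrow> 'a set \<Rightarrow> real" where
  "dist_set x A = Min ((\<lambda>a. dist x a) ` A)"

text \<open>A family of sets ordered by inclusion, as a finite T0 space whose open sets are the down-sets.\<close>
definition downset_topology :: "'b set set \<Rightarrow> 'b set topology" where
  "downset_topology U = topology (\<lambda>S. S \<subseteq> U \<and> (\<forall>C\<in>S. \<forall>D\<in>U. D \<subseteq> C \<longrightarrow> D \<in> S))"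

lemma istopology_downset:
  "istopology (\<lambda>S. S \<subseteq> U \<and> (\<forall>C\<in>S. \<forall>D\<in>U. D \<subseteq> C \<longrightarrow> D \<in> S))"
  unfolding istopology_def by blast

lemma openin_downset_topology:
  "openin (downset_topology U) S \<longleftrightarrow> S \<subseteq> U \<and> (\<forall>C\<in>S. \<forall>D\<in>U. D \<subseteq> C \<longrightarrow> D \<in> S)"
  unfolding downset_topology_def topology_inverse'[OF istopology_downset] by (rule refl)

end

theory Submission
  imports Defs
begin

lemma diam_le_metric:
  fixes S :: "'a::metric_space set"
  assumes "S \<noteq> {}" and "\<And>x y. x \<in> S \<Longrightarrow> y \<in> S \<Longrightarrow> dist x y \<le> d"
  shows "diameter S \<le> d"
  using assms by (auto simp: diameter_def intro: cSUP_least)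

lemma dist_set_props:
  fixes A :: "'a::metric_space set"
  assumes "finite A" "A \<noteq> {}"
  shows "\<And>a. a \<in> A \<Longrightarrow> dist_set x A \<le> dist x a"
    and "\<exists>a\<in>A. dist x a = dist_set x A"
proof -
  fix a assume "a \<in> A"
  then show "dist_set x A \<le> dist x a" unfolding dist_set_def using assms by auto
next
  have "dist_set x A \<in> (\<lambda>a. dist x a) ` A" unfolding dist_set_def
    using assms by (intro Min_in) auto
  then show "\<exists>a\<in>A. dist x a = dist_set x A" by auto
qed

theorem lemma4p1:
  fixes X A :: "'a::metric_space set" and eps :: real
  assumes "compact X" and "eps > 0" and "eps_approx X eps A"
  defines "p \<equiv> (\<lambda>x. {a\<in>A. dist x a = dist_set x A})"
  shows "(\<forall>x\<in>X. p x \<in> U_sets (4 * eps) A)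
       \<and> continuous_map (top_of_set X) (downset_topology (U_sets (4 * eps) A)) p"
proof -
  have finA: "finite A" and AX: "A \<subseteq> X" and apx: "\<forall>x\<in>X. \<exists>a\<in>A. dist x a < eps"
    using assms(3) unfolding eps_approx_def by auto
  have wd: "p x \<in> U_sets (4 * eps) A" if x: "x \<in> X" for x
  proof -
    obtain a0 where a0: "a0 \<in> A" "dist x a0 < eps" using apx x by auto
    have Ane: "A \<noteq> {}" using a0 by auto
    have le: "dist_set x A < eps" using dist_set_props(1)[OF finA Ane a0(1), of x] a0 by linarith
    obtain b where b: "b \<in> A" "dist x b = dist_set x A" using dist_set_props(2)[OF finA Ane] by blast
    have ne: "p x \<noteq> {}" using b unfolding p_def by auto
    have "diameter (p x) \<le> 2 * eps"
    proof (rule diam_le_metric[OF ne])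
      fix u v assume "u \<in> p x" "v \<in> p x"
      then have "dist x u = dist_set x A" "dist x v = dist_set x A" unfolding p_def by auto
      moreover have "dist u v \<le> dist x u + dist x v"
        by (metis dist_commute dist_triangle)
      ultimately show "dist u v \<le> 2 * eps" using le by linarith
    qed
    then show ?thesis unfolding U_sets_def p_def using ne assms(2) by (auto simp: p_def)
  qed
  let ?U = "U_sets (4 * eps) A"
  have top: "topspace (downset_topology ?U) = ?U"
    unfolding topspace_def openin_downset_topology by blast
  have cont: "openin (top_of_set X) {x \<in> X. p x \<in> S}"
    if S: "openin (downset_topology ?U) S" for S
  proof (subst openin_subopen, intro ballI)
    fix x assume "x \<in> {x \<in> X. p x \<in> S}"
    then have x: "x \<in> X" "p x \<in> S" by auto
    obtain a0 where a0: "a0 \<in> A" using apx x by auto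
    have Ane: "A \<noteq> {}" using a0 by auto
    obtain b where b: "b \<in> A" "dist x b = dist_set x A" using dist_set_props(2)[OF finA Ane] by blast
    define N where "N = (\<Inter>a\<in>A - p x. {y. dist y b < dist y a})"
    have "open N" unfolding N_def using finA
      by (intro open_INT) (auto intro!: open_Collect_less continuous_intros)
    have xN: "x \<in> N" unfolding N_def
    proof safe
      fix a assume "a \<in> A" "a \<notin> p x"
      then have "dist x a \<noteq> dist_set x A" unfolding p_def by auto
      moreover have "dist_set x A \<le> dist x a" using dist_set_props(1)[OF finA Ane \<open>a \<in> A\<close>] .
      ultimately show "dist x b < dist x a" using b by linarith
    qed
    have sub: "p y \<subseteq> p x" if "y \<in> N" for y
    proof
      fix a assume a: "a \<in> p y"
      show "a \<in> p x"
      proof (rule ccontr)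
        assume "a \<notin> p x"
        with a have "a \<in> A - p x" unfolding p_def by auto
        with that have "dist y b < dist y a" unfolding N_def by blast
        moreover have "dist_set y A \<le> dist y b" using dist_set_props(1)[OF finA Ane b(1)] .
        ultimately show False using a unfolding p_def by auto
      qed
    qed
    show "\<exists>T. openin (top_of_set X) T \<and> x \<in> T \<and> T \<subseteq> {x \<in> X. p x \<in> S}"
    proof (intro exI conjI)
      show "openin (top_of_set X) (X \<inter> N)" using \<open>open N\<close> by auto
      show "x \<in> X \<inter> N" using x xN by auto
      show "X \<inter> N \<subseteq> {x \<in> X. p x \<in> S}"
      proof safe
        fix y assume y: "y \<in> X" "y \<in> N"
        have "p y \<in> ?U" using wd y(1) .
        then show "p y \<in> S" using S x(2) sub[OF y(2)] unfolding openin_downset_topology by blast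
      qed
    qed
  qed
  show ?thesis
    using wd cont unfolding continuous_map_def top by auto
qed

end
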